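(* Let $a,b$ be real with $0<a<a+b<1$. If $a+b>1/2$ then \[ \frac{\Gamma(a+b)}{\Gamma(a+2b)}<\frac{\Gamma(1-a-b)}{\Gamma(1-a)}, \] and if $a+b<1/2$ the reverse strict inequality holds.
   Context: $\Gamma$ denotes the Euler gamma function. *)

theory Defs
  imports "HOL-Analysis.Analysis"
begin

end

theory Submission
  imports Defs
begin

lemma lg_incr:
  fixes x y b :: real
  assumes "0 < x" "x < y" "0 < b"
  shows "ln_Gamma (x + b) - ln_Gamma x < ln_Gamma (y + b) - ln_Gamma y"
proof -
  have "(\<lambda>t. ln_Gamma (t + b) - ln_Gamma t) x < (\<lambda>t. ln_Gamma (t + b) - ln_Gamma t) y"
  proof (rule DERIV_pos_imp_increasing[OF assms(2)])
    fix t assume t: "x \<le> t" "t \<le> y"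
    hence tp: "t > 0" using assms by simp
    have "((\<lambda>t. ln_Gamma (t + b) - ln_Gamma t) has_field_derivative
          (Digamma (t + b) * 1 - Digamma t)) (at t)"
      using tp assms
      by (intro derivative_intros DERIV_chain2[where f = ln_Gamma] has_field_derivative_ln_Gamma_real) (auto intro!: derivative_eq_intros)
    moreover have "Digamma (t + b) * 1 - Digamma t > 0"
      using Digamma_real_strict_mono[of t "t+b"] tp assms by simp
    ultimately show "\<exists>d. DERIV (\<lambda>t. ln_Gamma (t + b) - ln_Gamma t) t :> d \<and> d > 0" by blast
  qed
  thus ?thesis by simp
qed

lemma ratio_exp:
  fixes x b :: real
  assumes "0 < x" "0 < b"
  shows "Gamma x / Gamma (x + b) = exp (- (ln_Gamma (x + b) - ln_Gamma x))"
  using assms by (simp add: Gamma_real_pos_exp exp_diff)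

theorem lemma2:
  fixes a b :: real
  assumes "0 < a" and "a < a + b" and "a + b < 1"
  shows "(a + b > 1/2 \<longrightarrow> Gamma (a + b) / Gamma (a + 2*b) < Gamma (1 - a - b) / Gamma (1 - a))
       \<and> (a + b < 1/2 \<longrightarrow> Gamma (a + b) / Gamma (a + 2*b) > Gamma (1 - a - b) / Gamma (1 - a))"
proof -
  have b: "b > 0" using assms by simp
  have e1: "Gamma (a + b) / Gamma (a + 2*b) = exp (- (ln_Gamma ((a+b) + b) - ln_Gamma (a+b)))"
    using ratio_exp[of "a+b" b] assms b by (simp add: algebra_simps)
  have e2: "Gamma (1 - a - b) / Gamma (1 - a) = exp (- (ln_Gamma ((1-a-b) + b) - ln_Gamma (1-a-b)))"
    using ratio_exp[of "1-a-b" b] assms b by (simp add: algebra_simps)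
  show ?thesis
  proof (intro conjI impI)
    assume h: "a + b > 1/2"
    have "ln_Gamma ((1-a-b) + b) - ln_Gamma (1-a-b) < ln_Gamma ((a+b) + b) - ln_Gamma (a+b)"
      using lg_incr[of "1-a-b" "a+b" b] h assms b by simp
    thus "Gamma (a + b) / Gamma (a + 2*b) < Gamma (1 - a - b) / Gamma (1 - a)"
      unfolding e1 e2 by simp
  next
    assume h: "a + b < 1/2"
    have "ln_Gamma ((a+b) + b) - ln_Gamma (a+b) < ln_Gamma ((1-a-b) + b) - ln_Gamma (1-a-b)"
      using lg_incr[of "a+b" "1-a-b" b] h assms b by simp
    thus "Gamma (a + b) / Gamma (a + 2*b) > Gamma (1 - a - b) / Gamma (1 - a)"
      unfolding e1 e2 by simp
  qed
qed

end
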